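(* Let $\alpha_1,\alpha_2\in[-1,1]$ with $\alpha_1\alpha_2<0$ and let $\lambda:=\mathrm i\sqrt{-\alpha_1\alpha_2}$. Then, for each choice of sign $\pm$, as $n\to\infty$, $$\sum_{j=2}^n\frac{\Gamma^2(j)}{\Gamma^2(j\pm\lambda)}=\frac{\Gamma^2(n+1)}{(1\mp2\lambda)\,n\,\Gamma^2(n\pm\lambda)}+O(\log n).$$
   Context: $\Gamma$ denotes the Gamma function (evaluated at complex arguments); $\Gamma^2(z)=(\Gamma(z))^2$. *)

theory Defs
  imports "HOL-Analysis.Analysis" "HOL-Library.Landau_Symbols"
begin

end

theory Submission
  imports Defs
begin

lemma Re_pos_notin: "Re (z::complex) > 0 \<Longrightarrow> z \<notin> \<int>\<^sub>\<le>\<^sub>0"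
  by (auto elim!: nonpos_Ints_cases')

lemma harm_ln: "n \<ge> 1 \<Longrightarrow> (\<Sum>j=2..n. 1 / real j) \<le> ln (real n)"
proof (induction n rule: dec_induct)
  case base then show ?case by simp
next
  case (step n)
  have "1 / real (Suc n) \<le> ln (real (Suc n)) - ln (real n)"
  proof -
    have "ln (real n / real (Suc n)) \<le> real n / real (Suc n) - 1"
      using step by (intro ln_le_minus_one) auto
    moreover have "ln (real n / real (Suc n)) = ln (real n) - ln (real (Suc n))"
      using step by (simp add: ln_div)
    moreover have "real n / real (Suc n) - 1 = - (1 / real (Suc n))"
      by (simp add: field_simps)
    ultimately show ?thesis by linarith
  qed
  moreover have "(\<Sum>j=2..Suc n. 1 / real j) = (\<Sum>j=2..n. 1 / real j) + 1 / real (Suc n)"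
    using step by (simp add: sum.cl_ivl_Suc)
  ultimately show ?case using step by linarith
qed

lemma main:
  fixes \<tau> :: real
  defines "m \<equiv> \<i> * complex_of_real \<tau>"
  defines "a \<equiv> \<lambda>j::nat. Gamma (of_nat j :: complex) ^ 2 / Gamma (of_nat j + m) ^ 2"
  shows "(\<lambda>n::nat. (\<Sum>j=2..n. a j)
            - Gamma (of_nat n + 1 :: complex) ^ 2
              / ((1 - 2 * m) * of_nat n * Gamma (of_nat n + m) ^ 2))
         \<in> O[sequentially](\<lambda>n. complex_of_real (ln (real n)))"
proof -
  define c where "c = (\<lambda>j::nat. of_nat j * a j)"
  have nm: "norm (of_nat n + m) \<ge> real n" for n
  proof -
    have "norm (of_nat n + m) = sqrt (real n ^ 2 + \<tau> ^ 2)"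
      by (simp add: m_def cmod_def)
    also have "\<dots> \<ge> sqrt (real n ^ 2)" by (intro real_sqrt_le_mono) simp
    finally show ?thesis by simp
  qed
  have nm0: "of_nat n + m \<noteq> 0" if "n \<ge> 1" for n
    using nm[of n] that by auto
  have rec: "a (Suc n) = a n * of_nat n ^ 2 / (of_nat n + m) ^ 2" if "n \<ge> 1" for n
  proof -
    have "Gamma (of_nat n + 1 :: complex) = of_nat n * Gamma (of_nat n)"
      using that by (intro Gamma_plus1 Re_pos_notin) auto
    moreover have "Gamma (of_nat n + m + 1) = (of_nat n + m) * Gamma (of_nat n + m)"
      using that by (intro Gamma_plus1 Re_pos_notin) (auto simp: m_def)
    moreover have "of_nat (Suc n) + m = of_nat n + m + 1" "of_nat (Suc n) = of_nat n + (1::complex)" by simp_all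
    ultimately show ?thesis unfolding a_def
      by (simp only:) (simp add: power_mult_distrib ac_simps)
  qed
  define A where "A = norm (a 1)"
  have aA: "norm (a n) \<le> A" if "n \<ge> 1" for n
    using that
  proof (induction n rule: dec_induct)
    case base then show ?case by (simp add: A_def)
  next
    case (step n)
    have "norm (a (Suc n)) = norm (a n) * (real n / norm (of_nat n + m)) ^ 2"
      using rec[OF step(1)] by (simp add: norm_divide norm_mult norm_power power_divide)
    also have "\<dots> \<le> norm (a n) * 1"
      using nm[of n] step(1) nm0[OF step(1)]
      by (intro mult_left_mono) (auto simp: power_le_one)
    finally show ?case using step by simp
  qed
  have A0: "A \<ge> 0" by (simp add: A_def)
  have one2m: "norm (1 - 2 * m) \<ge> 1"
  proof -
    have "norm (1 - 2*m) \<ge> \<bar>Re (1 - 2*m)\<bar>" by (rule abs_Re_le_cmod)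
    thus ?thesis by (simp add: m_def)
  qed
  have one2m0: "1 - 2 * m \<noteq> 0" using one2m by auto
  define K where "K = norm m ^ 2 + 2 * norm m * norm (1 - 2*m) + norm (1 - 2*m) * norm m ^ 2"
  have K0: "K \<ge> 0" by (simp add: K_def)
  define e where "e = (\<lambda>n. a n - (c (Suc n) - c n) / (1 - 2*m))"
  have e_eq: "e n = a n * (((1 - 2 * m) * (2 * m * of_nat n + m ^ 2) + m ^ 2 * of_nat n)
        / ((1 - 2 * m) * (of_nat n + m) ^ 2))" if "n \<ge> 1" for n
  proof -
    have D: "(of_nat n + m) ^ 2 \<noteq> 0" using nm0[OF that] by simp
    have "e n = a n - ((of_nat n + 1) * (a n * of_nat n ^ 2 / (of_nat n + m) ^ 2) - of_nat n * a n) / (1 - 2 * m)"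
      unfolding e_def c_def rec[OF that] by simp
    also have "\<dots> = a n * (((1 - 2 * m) * (2 * m * of_nat n + m ^ 2) + m ^ 2 * of_nat n)
        / ((1 - 2 * m) * (of_nat n + m) ^ 2))"
      using D one2m0 by (simp add: field_simps) (simp add: algebra_simps power2_eq_square)
    finally show ?thesis .
  qed
  have eK: "norm (e n) \<le> A * K / real n" if "n \<ge> 1" for n
  proof -
    define q where "q = 1 - 2 * m"
    define N where "N = (of_nat n :: complex)"
    have Nn: "norm N = real n" by (simp add: N_def)
    have P: "norm (q * (2 * m * N + m ^ 2) + m ^ 2 * N) \<le> real n * K"
    proof -
      have "norm (q * (2 * m * N + m ^ 2) + m ^ 2 * N)
          \<le> norm q * (2 * norm m * real n + norm m ^ 2) + norm m ^ 2 * real n"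
        by (rule order_trans[OF norm_triangle_ineq])
           (auto simp: norm_mult norm_power Nn intro!: add_mono mult_left_mono
                 order_trans[OF norm_triangle_ineq])
      also have "\<dots> \<le> norm q * (2 * norm m * real n + norm m ^ 2 * real n) + norm m ^ 2 * real n"
        using that mult_left_mono[of 1 "real n" "norm m ^ 2"] by (intro add_mono mult_left_mono) auto
      also have "\<dots> = real n * K" by (simp add: K_def q_def algebra_simps)
      finally show ?thesis .
    qed
    have Dn: "norm ((N + m) ^ 2) \<ge> real n ^ 2"
      using nm[of n] by (simp add: N_def norm_power power_mono)
    have "norm (e n) = norm (a n) * (norm (q * (2 * m * N + m ^ 2) + m ^ 2 * N) / (norm q * norm ((N + m) ^ 2)))"
      unfolding e_eq[OF that] by (simp add: norm_mult norm_divide q_def N_def)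
    also have "\<dots> \<le> A * (real n * K / (1 * real n ^ 2))"
      using aA[OF that] P Dn one2m that K0 A0
      by (intro mult_mono frac_le mult_mono) (auto simp: q_def)
    also have "\<dots> = A * K / real n" by (simp add: power2_eq_square)
    finally show ?thesis .
  qed
  define q where "q = 1 - 2 * m"
  have fn: "(\<Sum>j=2..n. a j) - Gamma (of_nat n + 1 :: complex) ^ 2
              / ((1 - 2 * m) * of_nat n * Gamma (of_nat n + m) ^ 2)
        = (\<Sum>j=2..n. e j) + (a n - e n) - c 2 / q" if "n \<ge> 2" for n
  proof -
    have "(\<Sum>j=2..n. a j) = (\<Sum>j=2..n. e j + (c (Suc j) - c j) / q)"
      by (simp add: e_def q_def)
    also have "\<dots> = (\<Sum>j=2..n. e j) + (c (Suc n) - c 2) / q"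
      using that by (simp add: sum.distrib sum_divide_distrib[symmetric] sum_Suc_diff)
    finally have 1: "(\<Sum>j=2..n. a j) = (\<Sum>j=2..n. e j) + (c (Suc n) - c 2) / q" .
    have "Gamma (of_nat n + 1 :: complex) = of_nat n * Gamma (of_nat n)"
      using that by (intro Gamma_plus1 Re_pos_notin) auto
    hence 2: "Gamma (of_nat n + 1 :: complex) ^ 2
              / ((1 - 2 * m) * of_nat n * Gamma (of_nat n + m) ^ 2) = c n / q"
    proof -
      have n0: "(of_nat n :: complex) \<noteq> 0" using that by simp
      have "Gamma (of_nat n + 1 :: complex) ^ 2
              / ((1 - 2 * m) * of_nat n * Gamma (of_nat n + m) ^ 2)
          = of_nat n * (of_nat n * Gamma (of_nat n) ^ 2) / (of_nat n * (q * Gamma (of_nat n + m) ^ 2))"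
        unfolding \<open>Gamma (of_nat n + 1 :: complex) = of_nat n * Gamma (of_nat n)\<close>
        by (simp add: q_def power_mult_distrib power2_eq_square ac_simps)
      also have "\<dots> = of_nat n * Gamma (of_nat n) ^ 2 / (q * Gamma (of_nat n + m) ^ 2)"
        using n0 by (rule mult_divide_mult_cancel_left)
      also have "\<dots> = c n / q" by (simp add: c_def a_def)
      finally show ?thesis .
    qed
    have 3: "a n - e n = (c (Suc n) - c n) / q" by (simp add: e_def q_def)
    show ?thesis unfolding 1 2 3 by (simp add: diff_divide_distrib)
  qed
  show ?thesis
  proof (rule bigoI[where c = "2 * A * K + 3 * A"])
    show "\<forall>\<^sub>F n in sequentially. norm ((\<Sum>j=2..n. a j) - Gamma (of_nat n + 1 :: complex) ^ 2
              / ((1 - 2 * m) * of_nat n * Gamma (of_nat n + m) ^ 2))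
          \<le> (2 * A * K + 3 * A) * norm (complex_of_real (ln (real n)))"
      using eventually_ge_at_top[of 3]
    proof eventually_elim
      case (elim n)
      have ln1: "ln (real n) \<ge> 1"
        using elim exp_le by (subst ln_ge_iff) auto
      have s: "norm (\<Sum>j=2..n. e j) \<le> A * K * ln (real n)"
      proof -
        have "norm (\<Sum>j=2..n. e j) \<le> (\<Sum>j=2..n. A * K * (1 / real j))"
          by (rule order_trans[OF norm_sum sum_mono]) (use eK in auto)
        also have "\<dots> = A * K * (\<Sum>j=2..n. 1 / real j)" by (simp add: sum_distrib_left)
        also have "\<dots> \<le> A * K * ln (real n)"
          using harm_ln[of n] elim A0 K0 by (intro mult_left_mono) auto
        finally show ?thesis .
      qed
      have c2: "norm (c 2 / q) \<le> 2 * A"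
      proof -
        have "norm (c 2 / q) = 2 * norm (a 2) / norm q" by (simp add: c_def norm_divide norm_mult)
        also have "\<dots> \<le> 2 * norm (a 2) / 1"
          using one2m by (intro divide_left_mono) (auto simp: q_def)
        also have "\<dots> \<le> 2 * A" using aA[of 2] by simp
        finally show ?thesis .
      qed
      have en: "norm (e n) \<le> A * K" 
      proof -
        have "norm (e n) \<le> A * K / real n" using eK elim by auto
        also have "\<dots> \<le> A * K / 1" using A0 K0 elim by (intro divide_left_mono) auto
        finally show ?thesis by simp
      qed
      have an: "norm (a n) \<le> A" using aA elim by auto
      have "norm ((\<Sum>j=2..n. e j) + (a n - e n) - c 2 / q)
            \<le> norm (\<Sum>j=2..n. e j) + (norm (a n) + norm (e n)) + norm (c 2 / q)"
        using norm_triangle_ineq4[of "(\<Sum>j=2..n. e j) + (a n - e n)" "c 2 / q"]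
          norm_triangle_ineq[of "(\<Sum>j=2..n. e j)" "a n - e n"] norm_triangle_ineq4[of "a n" "e n"]
        by linarith
      also have "\<dots> \<le> A * K * ln (real n) + (A + A * K) + 2 * A"
        using s an en c2 by linarith
      also have "\<dots> \<le> (2 * A * K + 3 * A) * ln (real n)"
      proof -
        have "A * K * 1 \<le> A * K * ln (real n)" "A * 1 \<le> A * ln (real n)"
          using ln1 A0 K0 by (intro mult_left_mono; simp)+
        thus ?thesis by (simp add: algebra_simps)
      qed
      finally show ?case using fn[of n] elim ln1 by simp
    qed
  qed
qed
theorem lemma3p4:
  fixes a1 a2 s :: real and lam :: complex
  assumes "a1 \<in> {-1..1}" and "a2 \<in> {-1..1}" and "a1 * a2 < 0"
    and "s \<in> {1, -1}"
    and "lam = \<i> * complex_of_real (sqrt (- a1 * a2))"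
  shows "(\<lambda>n::nat. (\<Sum>j=2..n. Gamma (of_nat j :: complex) ^ 2 / Gamma (of_nat j + complex_of_real s * lam) ^ 2)
            - Gamma (of_nat n + 1 :: complex) ^ 2
              / ((1 - 2 * complex_of_real s * lam) * of_nat n * Gamma (of_nat n + complex_of_real s * lam) ^ 2))
         \<in> O[sequentially](\<lambda>n. complex_of_real (ln (real n)))"
proof -
  have eq: "complex_of_real s * lam = \<i> * complex_of_real (s * sqrt (- a1 * a2))"
    using assms(5) by simp
  have eq2: "1 - 2 * complex_of_real s * lam = 1 - 2 * (complex_of_real s * lam)" by simp
  show ?thesis unfolding eq2 eq by (rule main)
qed

end
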